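(* Consider the Markov chain $X^N$ described in the context and let $t_c=1/\lambda$. For any $0<\delta<1$, with probability at least $1-e^{-\frac{\mu p_1}{K e}\frac{\delta^2}{2}N}$ it holds that \[ X^N_1(t_c)\ \ge\ (1-\delta)\frac{\mu p_1}{K e}N . \]
   Context: Learning dynamics: there are $K\ge 2$ arms; each pull of arm $k\in\{1,\dots,K\}$ yields an independent Bernoulli$(p_k)$ reward, where $1\ge p_1>p_2\ge\cdots\ge p_K\ge 0$; a "null arm" $0$ always yields reward $0$. There are $N$ individuals, each with an independent Poisson clock of rate $\lambda>0$ and a memory $M\in\{0,1,\dots,K\}$, initially $M=0$. Fix $\mu\in(0,1]$. When an individual's clock ticks, it selects $c\in\{0,\dots,K\}$: if its $M=0$, with probability $\mu$ it sets $c$ uniformly at random in $\{1,\dots,K\}$, and with probability $1-\mu$ it picks a peer uniformly at random among all $N$ individuals (including itself) and sets $c$ to that peer's memory; if $M\neq 0$, it always sets $c$ to the memory of a uniformly random peer (including itself). It pulls arm $c$, and if the reward is $1$ sets $M\leftarrow c$. $X^N_k(t)$ denotes the number of individuals with memory $k$ at time $t$; $e$ is Euler's number. *)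

theory Defs
  imports "HOL-Probability.Probability"
begin

text \<open>Configuration: memory of individual i (for i < N) is m i; arms 1..K, null arm 0.\<close>
type_synonym config = "nat \<Rightarrow> nat"

definition choice_pmf :: "nat \<Rightarrow> nat \<Rightarrow> real \<Rightarrow> config \<Rightarrow> nat \<Rightarrow> nat pmf" where
  "choice_pmf N K \<mu> m i =
     (let peer = map_pmf m (pmf_of_set {..<N}) in
      if m i = 0 then
        bind_pmf (bernoulli_pmf \<mu>) (\<lambda>b. if b then pmf_of_set {1..K} else peer)
      else peer)"

definition tick_pmf :: "nat \<Rightarrow> nat \<Rightarrow> real \<Rightarrow> (nat \<Rightarrow> real) \<Rightarrow> config \<Rightarrow> nat \<Rightarrow> config pmf" where
  "tick_pmf N K \<mu> p m i =
     bind_pmf (choice_pmf N K \<mu> m i) (\<lambda>c.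
       bind_pmf (if c = 0 then return_pmf False else bernoulli_pmf (p c)) (\<lambda>r.
         return_pmf (if r then m(i := c) else m)))"

text \<open>One jump of the uniformised chain: the next ticking clock belongs to a uniformly
  random individual (all N clocks have the same rate).\<close>
definition jump_pmf :: "nat \<Rightarrow> nat \<Rightarrow> real \<Rightarrow> (nat \<Rightarrow> real) \<Rightarrow> config \<Rightarrow> config pmf" where
  "jump_pmf N K \<mu> p m = bind_pmf (pmf_of_set {..<N}) (tick_pmf N K \<mu> p m)"

definition init_config :: config where
  "init_config = (\<lambda>_. 0)"

definition jumps_pmf :: "nat \<Rightarrow> nat \<Rightarrow> real \<Rightarrow> (nat \<Rightarrow> real) \<Rightarrow> nat \<Rightarrow> config pmf" where
  "jumps_pmf N K \<mu> p n = ((\<lambda>D. bind_pmf D (jump_pmf N K \<mu> p)) ^^ n) (return_pmf init_config)"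

text \<open>Law of the configuration at time t: the number of ticks of the N independent
  rate-lam Poisson clocks during [0,t] is Poisson(N rate t), each tick belonging to a
  uniformly random individual, independently.\<close>
definition config_at :: "nat \<Rightarrow> nat \<Rightarrow> real \<Rightarrow> (nat \<Rightarrow> real) \<Rightarrow> real \<Rightarrow> real \<Rightarrow> config pmf" where
  "config_at N K \<mu> p rate t = bind_pmf (poisson_pmf (real N * rate * t)) (jumps_pmf N K \<mu> p)"

definition Xcount :: "nat \<Rightarrow> nat \<Rightarrow> config \<Rightarrow> nat" where
  "Xcount N k m = card {i. i < N \<and> m i = k}"

end

theory Submission
  imports Defs "HOL-Complex_Analysis.Complex_Analysis"
begin

lemma integral_bind_pmf_bd:
  fixes f :: "'b \<Rightarrow> real"
  assumes "\<And>x. \<bar>f x\<bar> \<le> B"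
  shows "integral\<^sup>L (measure_pmf (bind_pmf M N)) f = (\<integral>x. integral\<^sup>L (measure_pmf (N x)) f \<partial>measure_pmf M)"
proof -
  have m: "(\<lambda>x. measure_pmf (N x)) \<in> measurable (measure_pmf M) (subprob_algebra (count_space UNIV))"
    using measurable_measure_pmf[of N] by (simp add: measurable_cong_sets)
  show ?thesis
  unfolding measure_pmf_bind
  apply (rule integral_bind[where K="count_space UNIV" and B=B and B'=1])
  using assms m by (auto simp: measure_pmf.finite_measure measure_pmf.emeasure_space_1)
qed

definition Hf :: "real \<Rightarrow> real \<Rightarrow> nat \<Rightarrow> nat \<Rightarrow> nat \<Rightarrow> complex \<Rightarrow> complex" where
  "Hf r d z g w x = (exp x - of_real (r*d) * x)^z * (exp x - of_real d)^g * exp (of_nat w * x)"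

lemma Hf_holo[holomorphic_intros]: "Hf r d z g w holomorphic_on S"
  unfolding Hf_def by (intro holomorphic_intros)

lemma Hf_deriv:
  "(Hf r d z g w has_field_derivative
     (of_nat z * (of_real r * Hf r d (z-1) (g+1) w x + of_real (1-r) * Hf r d (z-1) g (w+1) x)
      + of_nat g * Hf r d z (g-1) (w+1) x + of_nat w * Hf r d z g w x)) (at x)"
proof -
  define A where "A = exp x - of_real (r*d) * x"
  define B where "B = exp x - (of_real d::complex)"
  define E where "E = exp (of_nat w * x)"
  have d: "(Hf r d z g w has_field_derivative
     (of_nat z * A^(z-1) * (exp x - of_real (r*d))) * B^g * E + A^z * (of_nat g * B^(g-1) * exp x) * E
      + A^z * B^g * (E * of_nat w)) (at x)"
    unfolding Hf_def A_def B_def E_def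
    by (auto intro!: derivative_eq_intros) (simp add: algebra_simps)
  have e1: "exp (of_nat (Suc w) * x) = E * exp x" unfolding E_def
    by (simp add: distrib_right exp_add)
  have key: "(of_nat z * A^(z-1) * (exp x - of_real (r*d))) * B^g * E + A^z * (of_nat g * B^(g-1) * exp x) * E
      + A^z * B^g * (E * of_nat w) =
     (of_nat z * (of_real r * Hf r d (z-1) (g+1) w x + of_real (1-r) * Hf r d (z-1) g (w+1) x)
      + of_nat g * Hf r d z (g-1) (w+1) x + of_nat w * Hf r d z g w x)"
  proof -
    have h1: "of_nat z * A^(z-1) * (exp x - of_real (r*d)) * B^g * E
        = of_nat z * (of_real r * Hf r d (z-1) (g+1) w x + of_real (1-r) * Hf r d (z-1) g (w+1) x)"
      unfolding Hf_def A_def[symmetric] B_def[symmetric] E_def[symmetric] e1[unfolded One_nat_def[symmetric] Suc_eq_plus1]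
      by (simp add: B_def algebra_simps)
    have h2: "A^z * (of_nat g * B^(g-1) * exp x) * E = of_nat g * Hf r d z (g-1) (w+1) x"
      unfolding Hf_def A_def[symmetric] B_def[symmetric] E_def[symmetric] e1[unfolded One_nat_def[symmetric] Suc_eq_plus1]
      by (simp add: algebra_simps)
    have h3: "A^z * B^g * (E * of_nat w) = of_nat w * Hf r d z g w x"
      unfolding Hf_def A_def[symmetric] B_def[symmetric] E_def[symmetric] by (simp add: algebra_simps)
    show ?thesis by (simp only: h1 h2 h3)
  qed
  show ?thesis using d key by simp
qed

lemma Hf_deriv_eq:
  "deriv (Hf r d z g w) = (\<lambda>x. of_nat z * (of_real r * Hf r d (z-1) (g+1) w x + of_real (1-r) * Hf r d (z-1) g (w+1) x)
      + of_nat g * Hf r d z (g-1) (w+1) x + of_nat w * Hf r d z g w x)"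
  by (rule ext, rule DERIV_imp_deriv, rule Hf_deriv)

lemma Hf_higher:
  "(deriv ^^ Suc k) (Hf r d z g w) x = of_nat z * (of_real r * (deriv ^^ k) (Hf r d (z-1) (g+1) w) x
      + of_real (1-r) * (deriv ^^ k) (Hf r d (z-1) g (w+1)) x)
      + of_nat g * (deriv ^^ k) (Hf r d z (g-1) (w+1)) x + of_nat w * (deriv ^^ k) (Hf r d z g w) x"
proof -
  have "(deriv ^^ Suc k) (Hf r d z g w) x = (deriv ^^ k) (deriv (Hf r d z g w)) x"
    by (simp add: funpow_Suc_right del: funpow.simps)
  also have "\<dots> = of_nat z * (of_real r * (deriv ^^ k) (Hf r d (z-1) (g+1) w) x
      + of_real (1-r) * (deriv ^^ k) (Hf r d (z-1) g (w+1)) x)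
      + of_nat g * (deriv ^^ k) (Hf r d z (g-1) (w+1)) x + of_nat w * (deriv ^^ k) (Hf r d z g w) x"
    unfolding Hf_deriv_eq
    by (simp add: higher_deriv_add[where S=UNIV] higher_deriv_cmult[where A=UNIV] holomorphic_intros)
  finally show ?thesis .
qed

definition Uf :: "real \<Rightarrow> real \<Rightarrow> nat \<Rightarrow> nat \<Rightarrow> nat \<Rightarrow> nat \<Rightarrow> nat \<Rightarrow> real" where
  "Uf r d N k z g w = Re ((deriv ^^ k) (Hf r d z g w) 0) / real N ^ k"

lemma Uf0: "Uf r d N 0 z g w = (1 - d) ^ g"
proof -
  have "Hf r d z g w 0 = complex_of_real ((1 - d) ^ g)"
    unfolding Hf_def by simp
  then show ?thesis unfolding Uf_def by simp
qed

lemma Uf_rec: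
  assumes "N \<ge> 1"
  shows "Uf r d N (Suc k) z g w = (real z * (r * Uf r d N k (z-1) (g+1) w + (1-r) * Uf r d N k (z-1) g (w+1))
      + real g * Uf r d N k z (g-1) (w+1) + real w * Uf r d N k z g w) / real N"
  using assms unfolding Uf_def Hf_higher
  by (simp add: field_simps)

lemma Uf_bounds:
  assumes "N \<ge> 1" "0 \<le> r" "r \<le> 1" "0 \<le> d" "d \<le> 1"
  shows "z + g + w = N \<Longrightarrow> 0 \<le> Uf r d N k z g w \<and> Uf r d N k z g w \<le> 1"
proof (induction k arbitrary: z g w)
  case 0
  then show ?case using assms by (simp add: Uf0 power_le_one)
next
  case (Suc k)
  define A where "A = (if z = 0 then 0 else Uf r d N k (z-1) (g+1) w)"
  define B where "B = (if z = 0 then 0 else Uf r d N k (z-1) g (w+1))"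
  define C where "C = (if g = 0 then 0 else Uf r d N k z (g-1) (w+1))"
  define D where "D = Uf r d N k z g w"
  have A: "0 \<le> A \<and> A \<le> 1" unfolding A_def using Suc by auto
  have B: "0 \<le> B \<and> B \<le> 1" unfolding B_def using Suc by auto
  have C: "0 \<le> C \<and> C \<le> 1" unfolding C_def using Suc by auto
  have D: "0 \<le> D \<and> D \<le> 1" unfolding D_def using Suc by auto
  have eq: "Uf r d N (Suc k) z g w = (real z * (r * A + (1-r) * B) + real g * C + real w * D) / real N"
    unfolding Uf_rec[OF assms(1)] A_def B_def C_def D_def by simp
  have n: "real N = real z + real g + real w" using Suc.prems by simp
  have lo: "0 \<le> real z * (r * A + (1-r) * B) + real g * C + real w * D"
    using A B C D assms by (intro add_nonneg_nonneg mult_nonneg_nonneg) auto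
  have "real z * (r * A + (1-r) * B) \<le> real z * 1"
    using A B assms by (intro mult_left_mono) (auto intro: convex_bound_le)
  moreover have "real g * C \<le> real g * 1" using C by (intro mult_left_mono) auto
  moreover have "real w * D \<le> real w * 1" using D by (intro mult_left_mono) auto
  ultimately have hi: "real z * (r * A + (1-r) * B) + real g * C + real w * D \<le> real N"
    unfolding n by linarith
  show ?case unfolding eq using lo hi assms(1) by (simp add: divide_le_eq_1)
qed

lemma Uf_mono:
  assumes "N \<ge> 1" "0 \<le> r" "r \<le> 1" "0 \<le> d" "d \<le> 1"
  shows "Uf r d N k z (g+1) w \<le> Uf r d N k z g (w+1)"
proof (induction k arbitrary: z g w)
  case 0
  then show ?case using assms by (simp add: Uf0 mult_left_le_one_le)
next
  case (Suc k)
  have e1: "Uf r d N (Suc k) z (g+1) w = (real z * (r * Uf r d N k (z-1) (g+2) w + (1-r) * Uf r d N k (z-1) (g+1) (w+1))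
      + real (g+1) * Uf r d N k z g (w+1) + real w * Uf r d N k z (g+1) w) / real N"
    unfolding Uf_rec[OF assms(1)] by (simp add: numeral_2_eq_2)
  have e2: "Uf r d N (Suc k) z g (w+1) = (real z * (r * Uf r d N k (z-1) (g+1) (w+1) + (1-r) * Uf r d N k (z-1) g (w+2))
      + real g * Uf r d N k z (g-1) (w+2) + real (w+1) * Uf r d N k z g (w+1)) / real N"
    unfolding Uf_rec[OF assms(1)] by (simp add: numeral_2_eq_2)
  have i1: "Uf r d N k (z-1) (g+2) w \<le> Uf r d N k (z-1) (g+1) (w+1)"
    using Suc.IH[of "z-1" "g+1" w] by (simp add: numeral_2_eq_2)
  have i2: "Uf r d N k (z-1) (g+1) (w+1) \<le> Uf r d N k (z-1) g (w+2)"
    using Suc.IH[of "z-1" g "w+1"] by (simp add: numeral_2_eq_2)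
  have i3: "g \<ge> 1 \<Longrightarrow> Uf r d N k z g (w+1) \<le> Uf r d N k z (g-1) (w+2)"
    using Suc.IH[of z "g-1" "w+1"] by (simp add: numeral_2_eq_2)
  have i4: "Uf r d N k z (g+1) w \<le> Uf r d N k z g (w+1)"
    using Suc.IH[of z g w] by simp
  have a: "real z * (r * Uf r d N k (z-1) (g+2) w + (1-r) * Uf r d N k (z-1) (g+1) (w+1))
     \<le> real z * (r * Uf r d N k (z-1) (g+1) (w+1) + (1-r) * Uf r d N k (z-1) g (w+2))"
    using i1 i2 assms by (intro mult_left_mono add_mono) auto
  have b: "real (g+1) * Uf r d N k z g (w+1) + real w * Uf r d N k z (g+1) w
     \<le> real g * Uf r d N k z (g-1) (w+2) + real (w+1) * Uf r d N k z g (w+1)"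
  proof (cases "g = 0")
    case True then show ?thesis using i4 by (simp add: algebra_simps mult_left_mono)
  next
    case False
    then have "real g * Uf r d N k z g (w+1) \<le> real g * Uf r d N k z (g-1) (w+2)"
      using i3 by (intro mult_left_mono) auto
    moreover have "real w * Uf r d N k z (g+1) w \<le> real w * Uf r d N k z g (w+1)"
      using i4 by (intro mult_left_mono) auto
    ultimately show ?thesis by (simp add: algebra_simps)
  qed
  show ?case unfolding e1 e2 using a b assms(1)
    by (intro divide_right_mono) auto
qed

lemma Uf_sums:
  assumes "N \<ge> 1"
  shows "(\<lambda>k. pmf (poisson_pmf (real N)) k * Uf r d N k N 0 0) sums (exp (- real N) * (exp 1 - r * d) ^ N)"
proof -
  have "((\<lambda>n. (deriv ^^ n) (Hf r d N 0 0) 0 / (fact n) * (1 - 0)^n) sums Hf r d N 0 0 1)"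
    by (rule holomorphic_power_series[where r=2]) (auto intro: holomorphic_intros)
  then have "(\<lambda>n. Re ((deriv ^^ n) (Hf r d N 0 0) 0) / (fact n)) sums Re (Hf r d N 0 0 1)"
  proof -
    have "(\<lambda>n. Re ((deriv ^^ n) (Hf r d N 0 0) 0 / (fact n) * (1 - 0)^n)) sums Re (Hf r d N 0 0 1)"
      by (rule sums_Re) fact
    moreover have "Re ((deriv ^^ n) (Hf r d N 0 0) 0 / (fact n) * (1 - 0)^n) = Re ((deriv ^^ n) (Hf r d N 0 0) 0) / (fact n)" for n
      by (metis Re_divide_of_real mult_1_right of_real_fact power_one diff_zero)
    ultimately show ?thesis by simp
  qed
  moreover have "Hf r d N 0 0 1 = complex_of_real ((exp 1 - r * d) ^ N)"
  proof -
    have "exp (1::complex) = complex_of_real (exp 1)"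
      by (metis exp_of_real of_real_1)
    then show ?thesis unfolding Hf_def by simp
  qed
  ultimately have s: "(\<lambda>n. Re ((deriv ^^ n) (Hf r d N 0 0) 0) / (fact n)) sums ((exp 1 - r * d) ^ N)" by simp
  have "(\<lambda>n. exp (- real N) * (Re ((deriv ^^ n) (Hf r d N 0 0) 0) / (fact n))) sums (exp (- real N) * (exp 1 - r * d) ^ N)"
    by (rule sums_mult[OF s])
  moreover have "pmf (poisson_pmf (real N)) k * Uf r d N k N 0 0 = exp (- real N) * (Re ((deriv ^^ k) (Hf r d N 0 0) 0) / (fact k))" for k
    using assms by (simp add: Uf_def)
  ultimately show ?thesis by simp
qed

lemma integral_return_pmf_real: "integral\<^sup>L (measure_pmf (return_pmf x)) (f::_\<Rightarrow>real) = f x"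
  by (subst integral_measure_pmf_real[of "{x}"]) auto

lemma pmf_integral_le_const:
  fixes f :: "_ \<Rightarrow> real"
  assumes "\<And>x. f x \<le> B" "\<And>x. L \<le> f x"
  shows "integral\<^sup>L (measure_pmf M) f \<le> B"
proof -
  have bd: "\<bar>f x\<bar> \<le> \<bar>L\<bar> + \<bar>B\<bar>" for x using assms(1)[of x] assms(2)[of x] by auto
  have "integrable (measure_pmf M) f"
    by (rule measure_pmf.integrable_const_bound[where B="\<bar>L\<bar> + \<bar>B\<bar>"]) (auto intro!: AE_I2 simp: bd)
  then have "integral\<^sup>L (measure_pmf M) f \<le> integral\<^sup>L (measure_pmf M) (\<lambda>_. B)"
    by (intro integral_mono) (auto simp: assms)
  then show ?thesis by simp
qed

lemma pmf_integral_ge_const: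
  fixes f :: "_ \<Rightarrow> real"
  assumes "\<And>x. f x \<le> B" "\<And>x. L \<le> f x"
  shows "L \<le> integral\<^sup>L (measure_pmf M) f"
  using pmf_integral_le_const[of "\<lambda>x. - f x" "-L" "-B" M] assms by auto

lemma tick_bound:
  fixes h :: "config \<Rightarrow> real"
  assumes hB: "\<And>x. h x \<le> B" and hL: "\<And>x. L \<le> h x" and hA: "h (m(i := 1)) = A"
    and mi: "m i = 0" and K: "K \<ge> 1" and N: "N \<ge> 1" and mu: "0 \<le> \<mu>" "\<mu> \<le> 1"
    and p: "\<forall>k\<in>{1..K}. 0 \<le> p k \<and> p k \<le> 1"
  shows "integral\<^sup>L (measure_pmf (tick_pmf N K \<mu> p m i)) h \<le> B - (\<mu> * p 1 / real K) * (B - A)"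
proof -
  define rew where "rew = (\<lambda>c. if c = 0 then return_pmf False else bernoulli_pmf (p c))"
  define \<phi> where "\<phi> = (\<lambda>c. integral\<^sup>L (measure_pmf (rew c)) (\<lambda>r. h (if r then m(i := c) else m)))"
  have bd: "\<bar>h x\<bar> \<le> \<bar>L\<bar> + \<bar>B\<bar>" for x using hB[of x] hL[of x] by auto
  have t: "tick_pmf N K \<mu> p m i = bind_pmf (choice_pmf N K \<mu> m i)
      (\<lambda>c. map_pmf (\<lambda>r. if r then m(i := c) else m) (rew c))"
    unfolding tick_pmf_def rew_def map_pmf_def by simp
  have e1: "integral\<^sup>L (measure_pmf (tick_pmf N K \<mu> p m i)) h = integral\<^sup>L (measure_pmf (choice_pmf N K \<mu> m i)) \<phi>"
    unfolding t \<phi>_def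
    by (subst integral_bind_pmf_bd[where B="\<bar>L\<bar> + \<bar>B\<bar>"])
       (auto intro!: pmf_integral_le_const[of _ B L] pmf_integral_ge_const[of _ B L] simp: bd hB hL)
  have phiB: "\<phi> c \<le> B" for c unfolding \<phi>_def by (rule pmf_integral_le_const[of _ B L]) (auto simp: hB hL)
  have phiL: "L \<le> \<phi> c" for c unfolding \<phi>_def by (rule pmf_integral_ge_const[of _ B L]) (auto simp: hB hL)
  have phi1: "\<phi> 1 \<le> p 1 * A + (1 - p 1) * B"
  proof -
    have "0 \<le> p 1 \<and> p 1 \<le> 1" using p K by auto
    then have "\<phi> 1 = A * p 1 + h m * (1 - p 1)" unfolding \<phi>_def rew_def using hA by simp
    also have "\<dots> \<le> A * p 1 + B * (1 - p 1)"
      using \<open>0 \<le> p 1 \<and> p 1 \<le> 1\<close> hB by (intro add_left_mono mult_right_mono) auto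
    finally show ?thesis by (simp add: algebra_simps)
  qed
  define peer where "peer = map_pmf m (pmf_of_set {..<N})"
  have ch: "choice_pmf N K \<mu> m i = bind_pmf (bernoulli_pmf \<mu>) (\<lambda>b. if b then pmf_of_set {1..K} else peer)"
    unfolding choice_pmf_def peer_def using mi by simp
  have e2: "integral\<^sup>L (measure_pmf (choice_pmf N K \<mu> m i)) \<phi>
     = integral\<^sup>L (measure_pmf (pmf_of_set {1..K})) \<phi> * \<mu> + integral\<^sup>L (measure_pmf peer) \<phi> * (1 - \<mu>)"
    unfolding ch
    apply (subst integral_bind_pmf_bd[where B="\<bar>L\<bar> + \<bar>B\<bar>"])
    subgoal for x using phiB[of x] phiL[of x] by (simp add: abs_le_iff) linarith
    using mu by simp
  have e3: "integral\<^sup>L (measure_pmf (pmf_of_set {1..K})) \<phi> = (\<Sum>c\<in>{1..K}. \<phi> c) / real K"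
    using K by (subst integral_pmf_of_set) auto
  have "(\<Sum>c\<in>{1..K}. \<phi> c) = \<phi> 1 + (\<Sum>c\<in>{1..K} - {1}. \<phi> c)"
    using K by (subst sum.remove[of _ 1]) auto
  also have "(\<Sum>c\<in>{1..K} - {1}. \<phi> c) \<le> (\<Sum>c\<in>{1..K} - {1}. B)" by (intro sum_mono phiB)
  also have "\<dots> = (real K - 1) * B" using K by simp
  finally have s: "(\<Sum>c\<in>{1..K}. \<phi> c) \<le> p 1 * A + (1 - p 1) * B + (real K - 1) * B"
    using phi1 by linarith
  have pe: "integral\<^sup>L (measure_pmf peer) \<phi> \<le> B" by (rule pmf_integral_le_const[of _ B L]) (auto simp: phiB phiL)
  have "integral\<^sup>L (measure_pmf (tick_pmf N K \<mu> p m i)) h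
     \<le> (p 1 * A + (1 - p 1) * B + (real K - 1) * B) / real K * \<mu> + B * (1 - \<mu>)"
    unfolding e1 e2 e3 using s pe mu K
    by (intro add_mono mult_right_mono divide_right_mono) auto
  also have "\<dots> = B - (\<mu> * p 1 / real K) * (B - A)"
    using K by (simp add: field_simps)
  finally show ?thesis .
qed

definition aug_jump :: "nat \<Rightarrow> nat \<Rightarrow> real \<Rightarrow> (nat \<Rightarrow> real) \<Rightarrow> config \<times> (nat \<Rightarrow> nat) \<Rightarrow> (config \<times> (nat \<Rightarrow> nat)) pmf" where
  "aug_jump N K \<mu> p a = bind_pmf (pmf_of_set {..<N})
     (\<lambda>i. map_pmf (\<lambda>m'. (m', (snd a)(i := Suc (snd a i)))) (tick_pmf N K \<mu> p (fst a) i))"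

definition Zc :: "nat \<Rightarrow> config \<times> (nat \<Rightarrow> nat) \<Rightarrow> nat" where
  "Zc N a = card {i. i < N \<and> snd a i = 0}"
definition Gc :: "nat \<Rightarrow> config \<times> (nat \<Rightarrow> nat) \<Rightarrow> nat" where
  "Gc N a = card {i. i < N \<and> snd a i = 1 \<and> fst a i = 1}"
definition Vf :: "real \<Rightarrow> real \<Rightarrow> nat \<Rightarrow> nat \<Rightarrow> config \<times> (nat \<Rightarrow> nat) \<Rightarrow> real" where
  "Vf r d N k a = Uf r d N k (Zc N a) (Gc N a) (N - Zc N a - Gc N a)"

lemma tick_support: "m' \<in> set_pmf (tick_pmf N K \<mu> p m i) \<Longrightarrow> m' = m(i := m' i)"
  unfolding tick_pmf_def by (auto split: if_splits)

lemma ZG_le: "Zc N a + Gc N a \<le> N"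
proof -
  have "Zc N a + Gc N a = card ({i. i < N \<and> snd a i = 0} \<union> {i. i < N \<and> snd a i = 1 \<and> fst a i = 1})"
    unfolding Zc_def Gc_def by (rule card_Un_disjoint[symmetric]) auto
  also have "\<dots> \<le> card {..<N}" by (rule card_mono) auto
  finally show ?thesis by simp
qed

lemma Vf_bounds:
  assumes "N \<ge> 1" "0 \<le> r" "r \<le> 1" "0 \<le> d" "d \<le> 1"
  shows "0 \<le> Vf r d N k a \<and> Vf r d N k a \<le> 1"
  unfolding Vf_def using ZG_le[of N a] by (intro Uf_bounds[OF assms]) auto

lemma Vf0: "Vf r d N 0 a = (1 - d) ^ Gc N a"
  unfolding Vf_def Uf0 ..

lemma Zc_upd:
  assumes "i < N"
  shows "Zc N (m(i := x), c(i := Suc (c i))) = (if c i = 0 then Zc N (m, c) - 1 else Zc N (m, c))"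
proof -
  have "{j. j < N \<and> (c(i := Suc (c i))) j = 0} = {j. j < N \<and> c j = 0} - {i}" by auto
  then show ?thesis unfolding Zc_def using assms by (simp add: card_Diff_singleton_if)
qed

lemma Gc_upd:
  assumes "i < N"
  shows "Gc N (m(i := x), c(i := Suc (c i))) =
    (if c i = 0 then (if x = 1 then Gc N (m, c) + 1 else Gc N (m, c))
     else if c i = 1 \<and> m i = 1 then Gc N (m, c) - 1 else Gc N (m, c))"
proof -
  define S where "S = {j. j < N \<and> c j = 1 \<and> m j = 1}"
  have fin: "finite S" unfolding S_def by auto
  show ?thesis
  proof (cases "c i = 0")
    case True
    show ?thesis
    proof (cases "x = 1")
      case True
      have "{j. j < N \<and> (c(i := Suc (c i))) j = 1 \<and> (m(i := x)) j = 1} = insert i S"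
        unfolding S_def using \<open>c i = 0\<close> True assms by auto
      moreover have "i \<notin> S" unfolding S_def using \<open>c i = 0\<close> by auto
      ultimately show ?thesis unfolding Gc_def using fin \<open>c i = 0\<close> True by (simp add: S_def)
    next
      case False
      have "{j. j < N \<and> (c(i := Suc (c i))) j = 1 \<and> (m(i := x)) j = 1} = S"
        unfolding S_def using \<open>c i = 0\<close> False assms by auto
      then show ?thesis unfolding Gc_def using \<open>c i = 0\<close> False by (simp add: S_def)
    qed
  next
    case False
    have "{j. j < N \<and> (c(i := Suc (c i))) j = 1 \<and> (m(i := x)) j = 1} = S - {i}"
      unfolding S_def using False assms by auto
    moreover have "(i \<in> S) = (c i = 1 \<and> m i = 1)" unfolding S_def using assms by auto
    ultimately show ?thesis unfolding Gc_def using False by (simp add: S_def card_Diff_singleton_if)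
  qed
qed

lemma aug_step:
  assumes N: "N \<ge> 1" and K: "K \<ge> 1" and mu: "0 \<le> \<mu>" "\<mu> \<le> 1"
    and p: "\<forall>k\<in>{1..K}. 0 \<le> p k \<and> p k \<le> 1"
    and d: "0 \<le> d" "d \<le> 1"
    and inv: "\<forall>i. c i = 0 \<longrightarrow> m i = 0"
    and r: "r = \<mu> * p 1 / real K"
  shows "integral\<^sup>L (measure_pmf (aug_jump N K \<mu> p (m, c))) (Vf r d N k) \<le> Vf r d N (Suc k) (m, c)"
proof -
  have p1: "0 \<le> p 1" "p 1 \<le> 1" using p K by auto
  have r0: "0 \<le> r" using r mu p1 by simp
  have r1: "r \<le> 1"
  proof -
    have "\<mu> * p 1 \<le> 1 * 1" using mu p1 by (intro mult_mono) auto
    also have "\<dots> \<le> real K" using K by simp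
    finally show ?thesis using r K by (simp add: divide_le_eq_1)
  qed
  note VB = Vf_bounds[OF N r0 r1 d]
  define Z where "Z = Zc N (m, c)"
  define G where "G = Gc N (m, c)"
  define W where "W = N - Z - G"
  have ZG: "Z + G \<le> N" unfolding Z_def G_def by (rule ZG_le)
  define U' where "U' = Uf r d N k"
  define t0 where "t0 = r * U' (Z-1) (G+1) W + (1-r) * U' (Z-1) G (W+1)"
  define tG where "tG = U' Z (G-1) (W+1)"
  define tR where "tR = U' Z G W"
  define T where "T = (\<lambda>i. if c i = 0 then t0 else if c i = 1 \<and> m i = 1 then tG else tR)"
  define ci where "ci = (\<lambda>i. c(i := Suc (c i)))"
  have e: "integral\<^sup>L (measure_pmf (aug_jump N K \<mu> p (m, c))) (Vf r d N k)
      = (\<Sum>i<N. integral\<^sup>L (measure_pmf (tick_pmf N K \<mu> p m i)) (\<lambda>m'. Vf r d N k (m', ci i))) / real N"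
    unfolding aug_jump_def ci_def
    apply (subst integral_bind_pmf_bd[where B=1])
    subgoal using VB by (auto simp: abs_le_iff)
    using N by (subst integral_pmf_of_set) (auto simp: lessThan_empty_iff)
  have each: "integral\<^sup>L (measure_pmf (tick_pmf N K \<mu> p m i)) (\<lambda>m'. Vf r d N k (m', ci i)) \<le> T i"
    if i: "i < N" for i
  proof -
    define F where "F = (\<lambda>x. Vf r d N k (m(i := x), ci i))"
    have cong: "integral\<^sup>L (measure_pmf (tick_pmf N K \<mu> p m i)) (\<lambda>m'. Vf r d N k (m', ci i))
        = integral\<^sup>L (measure_pmf (tick_pmf N K \<mu> p m i)) (\<lambda>m'. F (m' i))"
      unfolding F_def
      by (intro integral_cong_AE) (auto simp: AE_measure_pmf_iff dest: tick_support)
    have Fx: "F x = U' (if c i = 0 then Z - 1 else Z)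
         (if c i = 0 then (if x = 1 then G + 1 else G) else if c i = 1 \<and> m i = 1 then G - 1 else G)
         (N - (if c i = 0 then Z - 1 else Z) -
            (if c i = 0 then (if x = 1 then G + 1 else G) else if c i = 1 \<and> m i = 1 then G - 1 else G))" for x
      unfolding F_def Vf_def ci_def Zc_upd[OF i] Gc_upd[OF i] U'_def Z_def G_def by simp
    show ?thesis
    proof (cases "c i = 0")
      case True
      have Z1: "Z \<ge> 1"
      proof -
        have "i \<in> {j. j < N \<and> c j = 0}" using i True by auto
        then have "card {j. j < N \<and> c j = 0} \<noteq> 0" by (auto simp: card_eq_0_iff)
        then have "1 \<le> card {j. j < N \<and> c j = 0}" by linarith
        then show ?thesis unfolding Z_def Zc_def by simp
      qed
      have FA: "F 1 = U' (Z-1) (G+1) W" using True Z1 ZG unfolding Fx W_def by simp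
      have FB: "x \<noteq> 1 \<Longrightarrow> F x = U' (Z-1) G (W+1)" for x using True Z1 ZG unfolding Fx W_def
        by (simp add: Suc_diff_le)
      have AB: "U' (Z-1) (G+1) W \<le> U' (Z-1) G (W+1)"
        unfolding U'_def by (rule Uf_mono[OF N r0 r1 d])
      have "integral\<^sup>L (measure_pmf (tick_pmf N K \<mu> p m i)) (\<lambda>m'. F (m' i))
          \<le> U' (Z-1) G (W+1) - (\<mu> * p 1 / real K) * (U' (Z-1) G (W+1) - U' (Z-1) (G+1) W)"
        apply (rule tick_bound[where L="U' (Z-1) (G+1) W"])
        subgoal for x using AB FA FB by (cases "x i = 1") auto
        subgoal for x using AB FA FB by (cases "x i = 1") auto
        using FA inv True K N mu p by auto
      also have "\<dots> = t0" unfolding t0_def r by (simp add: algebra_simps)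
      finally show ?thesis using cong True unfolding T_def by simp
    next
      case False
      show ?thesis
      proof (cases "c i = 1 \<and> m i = 1")
        case True
        have G1: "G \<ge> 1"
        proof -
          have "i \<in> {j. j < N \<and> c j = 1 \<and> m j = 1}" using i True by auto
          then have "card {j. j < N \<and> c j = 1 \<and> m j = 1} \<noteq> 0" by (auto simp: card_eq_0_iff)
          then have "1 \<le> card {j. j < N \<and> c j = 1 \<and> m j = 1}" by linarith
          then show ?thesis unfolding G_def Gc_def by simp
        qed
        have "F x = tG" for x using False True G1 ZG unfolding Fx tG_def W_def by (simp add: Suc_diff_le)
        then show ?thesis using cong False True unfolding T_def by simp
      next
        case False2: False
        have "F x = tR" for x using False False2 unfolding Fx tR_def W_def by auto
        then show ?thesis using cong False False2 unfolding T_def by auto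
      qed
    qed
  qed
  have sumT: "(\<Sum>i<N. T i) = real Z * t0 + real G * tG + real W * tR"
  proof -
    have "(\<Sum>i<N. T i) = (\<Sum>i<N. tR + (if c i = 0 then t0 - tR else 0) + (if c i = 1 \<and> m i = 1 then tG - tR else 0))"
      unfolding T_def by (intro sum.cong) auto
    also have "\<dots> = real N * tR + (\<Sum>i<N. if c i = 0 then t0 - tR else 0) + (\<Sum>i<N. if c i = 1 \<and> m i = 1 then tG - tR else 0)"
      by (simp add: sum.distrib)
    also have "(\<Sum>i<N. if c i = 0 then t0 - tR else 0) = real Z * (t0 - tR)"
    proof -
      have "(\<Sum>i<N. if c i = 0 then t0 - tR else 0) = (\<Sum>i\<in>{i\<in>{..<N}. c i = 0}. t0 - tR)"
        by (rule sum.inter_filter[symmetric]) auto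
      also have "{i\<in>{..<N}. c i = 0} = {i. i < N \<and> snd (m, c) i = 0}" by auto
      finally show ?thesis unfolding Z_def Zc_def by simp
    qed
    also have "(\<Sum>i<N. if c i = 1 \<and> m i = 1 then tG - tR else 0) = real G * (tG - tR)"
    proof -
      have "(\<Sum>i<N. if c i = 1 \<and> m i = 1 then tG - tR else 0) = (\<Sum>i\<in>{i\<in>{..<N}. c i = 1 \<and> m i = 1}. tG - tR)"
        by (rule sum.inter_filter[symmetric]) auto
      also have "{i\<in>{..<N}. c i = 1 \<and> m i = 1} = {i. i < N \<and> snd (m, c) i = 1 \<and> fst (m, c) i = 1}" by auto
      finally show ?thesis unfolding G_def Gc_def by simp
    qed
    finally show ?thesis unfolding W_def using ZG by (simp add: of_nat_diff algebra_simps)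
  qed
  have "integral\<^sup>L (measure_pmf (aug_jump N K \<mu> p (m, c))) (Vf r d N k) \<le> (\<Sum>i<N. T i) / real N"
    unfolding e using each N by (intro divide_right_mono sum_mono) auto
  also have "\<dots> = Vf r d N (Suc k) (m, c)"
    unfolding sumT Vf_def Uf_rec[OF N] Z_def[symmetric] G_def[symmetric] W_def[symmetric] t0_def tG_def tR_def U'_def
    by simp
  finally show ?thesis .
qed

lemma pmf_integral_mono_bd:
  fixes f g :: "_ \<Rightarrow> real"
  assumes "\<And>x. x \<in> set_pmf M \<Longrightarrow> f x \<le> g x" "\<And>x. \<bar>f x\<bar> \<le> B" "\<And>x. \<bar>g x\<bar> \<le> B"
  shows "integral\<^sup>L (measure_pmf M) f \<le> integral\<^sup>L (measure_pmf M) g"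
proof (rule integral_mono_AE)
  show "integrable (measure_pmf M) f"
    by (rule measure_pmf.integrable_const_bound[where B=B]) (auto intro!: AE_I2 simp: assms)
  show "integrable (measure_pmf M) g"
    by (rule measure_pmf.integrable_const_bound[where B=B]) (auto intro!: AE_I2 simp: assms)
  show "AE x in measure_pmf M. f x \<le> g x" using assms(1) by (simp add: AE_measure_pmf_iff)
qed

lemma aug_inv:
  assumes "a' \<in> set_pmf (aug_jump N K \<mu> p a)" "\<forall>i. snd a i = 0 \<longrightarrow> fst a i = 0"
  shows "\<forall>i. snd a' i = 0 \<longrightarrow> fst a' i = 0"
proof -
  obtain i m' where m': "m' \<in> set_pmf (tick_pmf N K \<mu> p (fst a) i)"
    and a': "a' = (m', (snd a)(i := Suc (snd a i)))"
    using assms(1) unfolding aug_jump_def by auto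
  have "m' = (fst a)(i := m' i)" by (rule tick_support[OF m'])
  then show ?thesis using assms(2) a' by (metis fun_upd_other fun_upd_same fst_conv snd_conv nat.distinct(1))
qed

definition augit :: "nat \<Rightarrow> nat \<Rightarrow> real \<Rightarrow> (nat \<Rightarrow> real) \<Rightarrow> nat \<Rightarrow> (config \<times> (nat \<Rightarrow> nat)) pmf \<Rightarrow> (config \<times> (nat \<Rightarrow> nat)) pmf" where
  "augit N K \<mu> p k D = ((\<lambda>D. bind_pmf D (aug_jump N K \<mu> p)) ^^ k) D"

lemma iter_bound:
  assumes N: "N \<ge> 1" and K: "K \<ge> 1" and mu: "0 \<le> \<mu>" "\<mu> \<le> 1"
    and p: "\<forall>k\<in>{1..K}. 0 \<le> p k \<and> p k \<le> 1"
    and d: "0 \<le> d" "d \<le> 1"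
    and r: "r = \<mu> * p 1 / real K"
  shows "(\<forall>a\<in>set_pmf D. \<forall>i. snd a i = 0 \<longrightarrow> fst a i = 0) \<Longrightarrow>
    integral\<^sup>L (measure_pmf (augit N K \<mu> p k D)) (\<lambda>a. (1 - d) ^ Gc N a) \<le> integral\<^sup>L (measure_pmf D) (Vf r d N k)"
proof (induction k arbitrary: D)
  case 0
  then show ?case by (simp add: augit_def Vf0)
next
  case (Suc k)
  have p1: "0 \<le> p 1" "p 1 \<le> 1" using p K by auto
  have r0: "0 \<le> r" using r mu p1 by simp
  have r1: "r \<le> 1"
  proof -
    have "\<mu> * p 1 \<le> 1 * 1" using mu p1 by (intro mult_mono) auto
    also have "\<dots> \<le> real K" using K by simp
    finally show ?thesis using r K by (simp add: divide_le_eq_1)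
  qed
  note VB = Vf_bounds[OF N r0 r1 d]
  have a: "augit N K \<mu> p (Suc k) D = augit N K \<mu> p k (bind_pmf D (aug_jump N K \<mu> p))"
    unfolding augit_def by (simp add: funpow_Suc_right del: funpow.simps)
  have inv: "\<forall>a\<in>set_pmf (bind_pmf D (aug_jump N K \<mu> p)). \<forall>i. snd a i = 0 \<longrightarrow> fst a i = 0"
    using Suc.prems aug_inv by fastforce
  have "integral\<^sup>L (measure_pmf (augit N K \<mu> p (Suc k) D)) (\<lambda>a. (1 - d) ^ Gc N a)
     \<le> integral\<^sup>L (measure_pmf (bind_pmf D (aug_jump N K \<mu> p))) (Vf r d N k)"
    unfolding a by (rule Suc.IH[OF inv])
  also have "\<dots> = integral\<^sup>L (measure_pmf D) (\<lambda>a. integral\<^sup>L (measure_pmf (aug_jump N K \<mu> p a)) (Vf r d N k))"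
    by (rule integral_bind_pmf_bd[where B=1]) (use VB in \<open>auto simp: abs_le_iff\<close>)
  also have "\<dots> \<le> integral\<^sup>L (measure_pmf D) (Vf r d N (Suc k))"
  proof (rule pmf_integral_mono_bd[where B=1])
    fix a assume "a \<in> set_pmf D"
    then have iv: "\<forall>i. snd a i = 0 \<longrightarrow> fst a i = 0" using Suc.prems by auto
    obtain m c where mc: "a = (m, c)" by fastforce
    show "integral\<^sup>L (measure_pmf (aug_jump N K \<mu> p a)) (Vf r d N k) \<le> Vf r d N (Suc k) a"
      unfolding mc by (rule aug_step[OF N K mu p d _ r]) (use iv mc in auto)
  next
    fix a
    have "0 \<le> integral\<^sup>L (measure_pmf (aug_jump N K \<mu> p a)) (Vf r d N k)"
      by (rule pmf_integral_ge_const[where B=1]) (use VB in auto)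
    moreover have "integral\<^sup>L (measure_pmf (aug_jump N K \<mu> p a)) (Vf r d N k) \<le> 1"
      by (rule pmf_integral_le_const[where L=0]) (use VB in auto)
    ultimately show "\<bar>integral\<^sup>L (measure_pmf (aug_jump N K \<mu> p a)) (Vf r d N k)\<bar> \<le> 1" by simp
  next
    fix a show "\<bar>Vf r d N (Suc k) a\<bar> \<le> 1" using VB by (simp add: abs_le_iff)
  qed
  finally show ?case .
qed

lemma augit_fst: "map_pmf fst (augit N K \<mu> p n (return_pmf (init_config, \<lambda>_. 0))) = jumps_pmf N K \<mu> p n"
proof (induction n)
  case 0
  then show ?case by (simp add: augit_def jumps_pmf_def)
next
  case (Suc n)
  have j: "map_pmf fst (aug_jump N K \<mu> p a) = jump_pmf N K \<mu> p (fst a)" for a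
    unfolding aug_jump_def jump_pmf_def map_bind_pmf by (simp add: pmf.map_comp o_def)
  show ?case
    using Suc unfolding augit_def jumps_pmf_def
    by (simp add: map_bind_pmf j bind_map_pmf[symmetric])
qed

lemma jumps_bound:
  assumes N: "N \<ge> 1" and K: "K \<ge> 1" and mu: "0 \<le> \<mu>" "\<mu> \<le> 1"
    and p: "\<forall>k\<in>{1..K}. 0 \<le> p k \<and> p k \<le> 1"
    and d: "0 \<le> d" "d \<le> 1"
    and r: "r = \<mu> * p 1 / real K"
  shows "integral\<^sup>L (measure_pmf (jumps_pmf N K \<mu> p n)) (\<lambda>m. (1 - d) ^ Xcount N 1 m) \<le> Uf r d N n N 0 0"
proof -
  define A where "A = augit N K \<mu> p n (return_pmf (init_config, \<lambda>_. 0))"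
  have "integral\<^sup>L (measure_pmf (jumps_pmf N K \<mu> p n)) (\<lambda>m. (1 - d) ^ Xcount N 1 m)
      = integral\<^sup>L (measure_pmf A) (\<lambda>a. (1 - d) ^ Xcount N 1 (fst a))"
    unfolding A_def augit_fst[symmetric] by simp
  also have "\<dots> \<le> integral\<^sup>L (measure_pmf A) (\<lambda>a. (1 - d) ^ Gc N a)"
  proof (rule pmf_integral_mono_bd[where B=1])
    fix a
    have "Gc N a \<le> Xcount N 1 (fst a)"
      unfolding Gc_def Xcount_def by (rule card_mono) auto
    then show "(1 - d) ^ Xcount N 1 (fst a) \<le> (1 - d) ^ Gc N a"
      using d by (intro power_decreasing) auto
  next
    fix a show "\<bar>(1 - d) ^ Xcount N 1 (fst a)\<bar> \<le> 1" using d by (simp add: power_le_one)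
  next
    fix a show "\<bar>(1 - d) ^ Gc N a\<bar> \<le> (1::real)" using d by (simp add: power_le_one)
  qed
  also have "\<dots> \<le> integral\<^sup>L (measure_pmf (return_pmf (init_config, \<lambda>_. 0))) (Vf r d N n)"
    unfolding A_def by (rule iter_bound[OF N K mu p d r]) (auto simp: init_config_def)
  also have "\<dots> = Vf r d N n (init_config, \<lambda>_. 0)" by (rule integral_return_pmf_real)
  also have "\<dots> = Uf r d N n N 0 0"
    unfolding Vf_def Zc_def Gc_def by simp
  finally show ?thesis .
qed

lemma ln_lower_aux:
  fixes y :: real assumes "0 < y" "y \<le> 1"
  shows "(y - 1 / y) / 2 \<le> ln y"
proof -
  define f where "f = (\<lambda>t::real. ln t - (t - 1 / t) / 2)"
  have "f 1 \<le> f y"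
  proof (rule DERIV_nonpos_imp_nonincreasing[OF assms(2)])
    fix x assume x: "y \<le> x" "x \<le> 1"
    then have x0: "0 < x" using assms by simp
    have "DERIV f x :> (1 / x - (1 + 1 / x^2) / 2)"
      unfolding f_def using x0 by (auto intro!: derivative_eq_intros simp: power2_eq_square field_simps)
    moreover have "1 / x - (1 + 1 / x^2) / 2 \<le> 0"
    proof -
      have "1 / x - (1 + 1 / x^2) / 2 = - ((x - 1)^2 / (2 * x^2))"
        using x0 by (simp add: field_simps power2_eq_square)
      also have "\<dots> \<le> 0" by simp
      finally show ?thesis .
    qed
    ultimately show "\<exists>d. DERIV f x :> d \<and> d \<le> 0" by blast
  qed
  then show ?thesis unfolding f_def by simp
qed

lemma delta_ineq:
  fixes \<delta> :: real assumes "0 < \<delta>" "\<delta> < 1"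
  shows "\<delta>^2 / 2 \<le> \<delta> + (1 - \<delta>) * ln (1 - \<delta>)"
proof -
  have "((1 - \<delta>) - 1 / (1 - \<delta>)) / 2 \<le> ln (1 - \<delta>)" using assms by (intro ln_lower_aux) auto
  then have "(1 - \<delta>) * (((1 - \<delta>) - 1 / (1 - \<delta>)) / 2) \<le> (1 - \<delta>) * ln (1 - \<delta>)"
    using assms by (intro mult_left_mono) auto
  moreover have "(1 - \<delta>) * (((1 - \<delta>) - 1 / (1 - \<delta>)) / 2) = \<delta>^2/2 - \<delta>"
    using assms by (simp add: field_simps power2_eq_square)
  ultimately show ?thesis by simp
qed

lemma poisson_integral_Uf:
  assumes N: "N \<ge> 1" and bd: "\<And>k. 0 \<le> Uf r d N k N 0 0"
  shows "integral\<^sup>L (measure_pmf (poisson_pmf (real N))) (\<lambda>k. Uf r d N k N 0 0) = exp (- real N) * (exp 1 - r * d) ^ N"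
proof -
  have s: "(\<lambda>k. pmf (poisson_pmf (real N)) k * Uf r d N k N 0 0) sums (exp (- real N) * (exp 1 - r * d) ^ N)"
    by (rule Uf_sums[OF N])
  have nn: "0 \<le> pmf (poisson_pmf (real N)) k * Uf r d N k N 0 0" for k using bd by simp
  have int: "integrable (count_space UNIV) (\<lambda>k. pmf (poisson_pmf (real N)) k * Uf r d N k N 0 0)"
    unfolding integrable_count_space_nat_iff using sums_summable[OF s] nn by simp
  have "integral\<^sup>L (measure_pmf (poisson_pmf (real N))) (\<lambda>k. Uf r d N k N 0 0)
     = integral\<^sup>L (count_space UNIV) (\<lambda>k. pmf (poisson_pmf (real N)) k * Uf r d N k N 0 0)"
    unfolding measure_pmf_eq_density by (subst integral_density) auto
  also have "\<dots> = (\<Sum>k. pmf (poisson_pmf (real N)) k * Uf r d N k N 0 0)"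
    by (rule integral_count_space_nat[OF int])
  also have "\<dots> = exp (- real N) * (exp 1 - r * d) ^ N" using s by (simp add: sums_iff)
  finally show ?thesis .
qed

theorem lemma2:
  fixes N K :: nat and \<mu> rate \<delta> :: real and p :: "nat \<Rightarrow> real"
  assumes "K \<ge> 2" and "N \<ge> 1"
    and "\<forall>k\<in>{1..K}. 0 \<le> p k \<and> p k \<le> 1"
    and "p 1 > p 2"
    and "\<forall>k\<in>{2..<K}. p (k + 1) \<le> p k"
    and "rate > 0" and "0 < \<mu>" and "\<mu> \<le> 1"
    and "0 < \<delta>" and "\<delta> < 1"
  shows "measure_pmf.prob (config_at N K \<mu> p rate (1 / rate))
           {m. real (Xcount N 1 m) \<ge> (1 - \<delta>) * (\<mu> * p 1 / (real K * exp 1)) * real N}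
         \<ge> 1 - exp (- (\<mu> * p 1 / (real K * exp 1)) * (\<delta>\<^sup>2 / 2) * real N)"
proof -
  have N: "N \<ge> 1" and K: "K \<ge> 1" using assms by auto
  have mu: "0 \<le> \<mu>" "\<mu> \<le> 1" using assms by auto
  have p: "\<forall>k\<in>{1..K}. 0 \<le> p k \<and> p k \<le> 1" using assms by auto
  have d: "0 \<le> \<delta>" "\<delta> \<le> 1" using assms by auto
  define r where "r = \<mu> * p 1 / real K"
  define q where "q = \<mu> * p 1 / (real K * exp 1)"
  have qr: "q = r / exp 1" unfolding q_def r_def by simp
  have p1: "0 \<le> p 1" "p 1 \<le> 1" using p K by auto
  have r0: "0 \<le> r" using mu p1 unfolding r_def by simp
  have r1: "r \<le> 1"
  proof -
    have "\<mu> * p 1 \<le> 1 * 1" using mu p1 by (intro mult_mono) auto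
    also have "\<dots> \<le> real K" using K by simp
    finally show ?thesis using K unfolding r_def by (simp add: divide_le_eq_1)
  qed
  have q0: "0 \<le> q" using r0 qr by simp
  have q1: "q * \<delta> \<le> 1"
  proof -
    have "q \<le> 1" using r1 r0 qr by (simp add: divide_le_eq_1) (smt (verit) one_le_exp_iff)
    then show ?thesis using d q0 by (simp add: mult_le_one)
  qed
  define \<beta> where "\<beta> = 1 - \<delta>"
  have b0: "0 < \<beta>" "\<beta> < 1" unfolding \<beta>_def using assms by auto
  define A where "A = (1 - \<delta>) * q * real N"
  define P where "P = config_at N K \<mu> p rate (1 / rate)"
  have P: "P = bind_pmf (poisson_pmf (real N)) (jumps_pmf N K \<mu> p)"
    unfolding P_def config_at_def using assms(6) by simp
  have Ubd: "0 \<le> Uf r \<delta> N k N 0 0 \<and> Uf r \<delta> N k N 0 0 \<le> 1" for k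
    by (rule Uf_bounds[OF N r0 r1 d]) simp
  have bX: "\<bar>\<beta> ^ Xcount N 1 m\<bar> \<le> 1" for m using b0 by (simp add: power_le_one)
  have E: "integral\<^sup>L (measure_pmf P) (\<lambda>m. \<beta> ^ Xcount N 1 m) \<le> exp (- real N) * (exp 1 - r * \<delta>) ^ N"
  proof -
    have "integral\<^sup>L (measure_pmf P) (\<lambda>m. \<beta> ^ Xcount N 1 m)
       = integral\<^sup>L (measure_pmf (poisson_pmf (real N))) (\<lambda>n. integral\<^sup>L (measure_pmf (jumps_pmf N K \<mu> p n)) (\<lambda>m. \<beta> ^ Xcount N 1 m))"
      unfolding P by (rule integral_bind_pmf_bd[where B=1]) (rule bX)
    also have "\<dots> \<le> integral\<^sup>L (measure_pmf (poisson_pmf (real N))) (\<lambda>n. Uf r \<delta> N n N 0 0)"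
    proof (rule pmf_integral_mono_bd[where B=1])
      fix n show "integral\<^sup>L (measure_pmf (jumps_pmf N K \<mu> p n)) (\<lambda>m. \<beta> ^ Xcount N 1 m) \<le> Uf r \<delta> N n N 0 0"
        unfolding \<beta>_def by (rule jumps_bound[OF N K mu p d r_def])
    next
      fix n
      have "0 \<le> integral\<^sup>L (measure_pmf (jumps_pmf N K \<mu> p n)) (\<lambda>m. \<beta> ^ Xcount N 1 m)"
        by (rule pmf_integral_ge_const[where B=1]) (use b0 in \<open>auto simp: power_le_one\<close>)
      moreover have "integral\<^sup>L (measure_pmf (jumps_pmf N K \<mu> p n)) (\<lambda>m. \<beta> ^ Xcount N 1 m) \<le> 1"
        by (rule pmf_integral_le_const[where L=0]) (use b0 in \<open>auto simp: power_le_one\<close>)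
      ultimately show "\<bar>integral\<^sup>L (measure_pmf (jumps_pmf N K \<mu> p n)) (\<lambda>m. \<beta> ^ Xcount N 1 m)\<bar> \<le> 1" by simp
    next
      fix n show "\<bar>Uf r \<delta> N n N 0 0\<bar> \<le> 1" using Ubd[of n] by simp
    qed
    also have "\<dots> = exp (- real N) * (exp 1 - r * \<delta>) ^ N"
      by (rule poisson_integral_Uf[OF N]) (use Ubd in auto)
    finally show ?thesis .
  qed
  have E2: "exp (- real N) * (exp 1 - r * \<delta>) ^ N \<le> exp (- q * \<delta> * real N)"
  proof -
    have "exp (- real N) * (exp 1 - r * \<delta>) ^ N = (exp (-1) * (exp 1 - r * \<delta>)) ^ N"
      by (simp add: power_mult_distrib exp_of_nat_mult[symmetric])
    also have "exp (-1) * (exp 1 - r * \<delta>) = 1 - q * \<delta>"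
      unfolding qr by (simp add: field_simps exp_minus)
    also have "(1 - q * \<delta>) ^ N \<le> (exp (- (q * \<delta>))) ^ N"
      using q1 by (intro power_mono) (auto simp: exp_ge_add_one_self[of "- (q * \<delta>)", simplified])
    also have "\<dots> = exp (- q * \<delta> * real N)"
      by (simp add: exp_of_nat_mult[symmetric] mult.commute)
    finally show ?thesis .
  qed
  define S where "S = {m. real (Xcount N 1 m) \<ge> A}"
  have ind: "indicator (- S) m \<le> \<beta> ^ Xcount N 1 m / \<beta> powr A" for m
  proof (cases "m \<in> S")
    case True then show ?thesis using b0 by simp
  next
    case False
    then have "real (Xcount N 1 m) \<le> A" unfolding S_def by simp
    then have "\<beta> powr A \<le> \<beta> powr real (Xcount N 1 m)" using b0 by (intro powr_mono') auto
    also have "\<dots> = \<beta> ^ Xcount N 1 m" using b0 by (simp add: powr_realpow)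
    finally show ?thesis using False b0 by simp
  qed
  have "measure_pmf.prob P (- S) = integral\<^sup>L (measure_pmf P) (indicator (- S))" by simp
  also have "\<dots> \<le> integral\<^sup>L (measure_pmf P) (\<lambda>m. \<beta> ^ Xcount N 1 m / \<beta> powr A)"
  proof (rule pmf_integral_mono_bd[where B="1 / \<beta> powr A + 1"])
    fix m show "indicator (- S) m \<le> \<beta> ^ Xcount N 1 m / \<beta> powr A" by (rule ind)
  next
    fix m show "\<bar>indicator (- S) m\<bar> \<le> 1 / \<beta> powr A + 1" using b0 by (simp add: indicator_def)
  next
    fix m
    have "\<beta> ^ Xcount N 1 m / \<beta> powr A \<le> 1 / \<beta> powr A"
      using b0 by (intro divide_right_mono) (auto simp: power_le_one)
    then show "\<bar>\<beta> ^ Xcount N 1 m / \<beta> powr A\<bar> \<le> 1 / \<beta> powr A + 1" using b0 by simp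
  qed
  also have "\<dots> = integral\<^sup>L (measure_pmf P) (\<lambda>m. \<beta> ^ Xcount N 1 m) / \<beta> powr A" by simp
  also have "\<dots> \<le> exp (- q * \<delta> * real N) / \<beta> powr A"
    using E E2 b0 by (intro divide_right_mono) auto
  also have "\<dots> = exp (- q * real N * (\<delta> + (1 - \<delta>) * ln (1 - \<delta>)))"
    using b0 unfolding powr_def A_def \<beta>_def by (simp add: exp_diff[symmetric] algebra_simps)
  also have "\<dots> \<le> exp (- q * (\<delta>\<^sup>2 / 2) * real N)"
  proof -
    have "q * real N * (\<delta>\<^sup>2 / 2) \<le> q * real N * (\<delta> + (1 - \<delta>) * ln (1 - \<delta>))"
      using delta_ineq[OF assms(9,10)] q0 by (intro mult_left_mono) auto
    then show ?thesis by (simp add: algebra_simps)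
  qed
  finally have bad: "measure_pmf.prob P (- S) \<le> exp (- q * (\<delta>\<^sup>2 / 2) * real N)" .
  have "measure_pmf.prob P S = 1 - measure_pmf.prob P (- S)"
    using measure_pmf.prob_compl[of S P] by (simp add: Compl_eq_Diff_UNIV)
  then have "measure_pmf.prob P S \<ge> 1 - exp (- q * (\<delta>\<^sup>2 / 2) * real N)" using bad by simp
  then show ?thesis unfolding P_def S_def A_def q_def by simp
qed

end
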